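(* Let $G$ be a graph having a perfect 2-matching. Then there is a graph $G'$ on the same vertex set with $d_{G'}(v)=d_G(v)$ for every vertex $v$, such that $G'$ has a perfect 2-matching with at most one odd cycle.
   Context: All graphs are finite and simple. A perfect 2-matching of a graph is a spanning subgraph each of whose connected components is either a $K_2$ (a single edge) or an odd cycle. *)

theory Defs
  imports Main
begin

definition simple_graph :: "'a set \<Rightarrow> 'a set set \<Rightarrow> bool" where
  "simple_graph V E \<longleftrightarrow> finite V \<and>
     (\<forall>e\<in>E. \<exists>u v. u \<noteq> v \<and> e = {u, v} \<and> u \<in> V \<and> v \<in> V)"

definition degree :: "'a set set \<Rightarrow> 'a \<Rightarrow> nat" where
  "degree E v = card {e \<in> E. v \<in> e}"

definition component :: "'a set \<Rightarrow> 'a set set \<Rightarrow> 'a \<Rightarrow> 'a set" where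
  "component V M v = {u \<in> V. (v, u) \<in> {(x, y). {x, y} \<in> M}\<^sup>*}"

definition components :: "'a set \<Rightarrow> 'a set set \<Rightarrow> 'a set set" where
  "components V M = component V M ` V"

definition edges_in :: "'a set set \<Rightarrow> 'a set \<Rightarrow> 'a set set" where
  "edges_in M C = {e \<in> M. e \<subseteq> C}"

definition is_K2 :: "'a set set \<Rightarrow> 'a set \<Rightarrow> bool" where
  "is_K2 M C \<longleftrightarrow> (\<exists>u w. u \<noteq> w \<and> C = {u, w} \<and> edges_in M C = {{u, w}})"

definition is_odd_cycle :: "'a set set \<Rightarrow> 'a set \<Rightarrow> bool" where
  "is_odd_cycle M C \<longleftrightarrow> (\<exists>vs. distinct vs \<and> length vs \<ge> 3 \<and> odd (length vs) \<and>
      set vs = C \<and>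
      edges_in M C = {{vs ! i, vs ! ((i + 1) mod length vs)} | i. i < length vs})"

definition perfect_2_matching :: "'a set \<Rightarrow> 'a set set \<Rightarrow> 'a set set \<Rightarrow> bool" where
  "perfect_2_matching V E M \<longleftrightarrow> M \<subseteq> E \<and>
     (\<forall>C \<in> components V M. is_K2 M C \<or> is_odd_cycle M C)"

end

theory Submission
  imports Defs
begin

definition rel :: "'a set set \<Rightarrow> ('a \<times> 'a) set" where
  "rel M = {(x, y). {x, y} \<in> M}"

definition wfe :: "'a set \<Rightarrow> 'a set set \<Rightarrow> bool" where
  "wfe V M \<longleftrightarrow> (\<forall>e\<in>M. \<exists>u v. u \<noteq> v \<and> e = {u, v} \<and> u \<in> V \<and> v \<in> V)"

lemma component_rel: "component V M v = {u \<in> V. (v, u) \<in> (rel M)\<^sup>*}"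
  unfolding component_def rel_def by simp

lemma rel_sym: "(x, y) \<in> rel M \<Longrightarrow> (y, x) \<in> rel M"
  unfolding rel_def by (simp add: insert_commute)

lemma rtr_sym: "(x, y) \<in> (rel M)\<^sup>* \<Longrightarrow> (y, x) \<in> (rel M)\<^sup>*"
proof (induction rule: rtrancl_induct)
  case base then show ?case by simp
next
  case (step y z)
  then show ?case by (meson converse_rtrancl_into_rtrancl rel_sym)
qed

lemma rel_mono: "M \<subseteq> M' \<Longrightarrow> rel M \<subseteq> rel M'"
  unfolding rel_def by auto

lemma rel_wfe: "wfe V M \<Longrightarrow> (x, y) \<in> rel M \<Longrightarrow> x \<in> V \<and> y \<in> V"
  unfolding rel_def wfe_def by (auto simp: doubleton_eq_iff)

lemma reach_V: "(v, u) \<in> (rel M)\<^sup>* \<Longrightarrow> wfe V M \<Longrightarrow> v \<in> V \<Longrightarrow> u \<in> V"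
  by (induction rule: rtrancl_induct) (auto dest: rel_wfe)

lemma comp_self: "v \<in> V \<Longrightarrow> v \<in> component V M v"
  unfolding component_rel by simp

lemma comp_sub: "component V M v \<subseteq> V"
  unfolding component_rel by auto

lemma comp_eq:
  assumes "u \<in> component V M v"
  shows "component V M u = component V M v"
proof -
  have uv: "(v, u) \<in> (rel M)\<^sup>*" using assms unfolding component_rel by simp
  hence vu: "(u, v) \<in> (rel M)\<^sup>*" by (rule rtr_sym)
  show ?thesis unfolding component_rel using uv vu
    by (auto intro: rtrancl_trans)
qed

lemma comp_disj:
  assumes "x \<in> component V M u" "x \<in> component V M v"
  shows "component V M u = component V M v"
  using comp_eq assms by metis

lemma comp_edge:
  assumes "{x, y} \<in> M" "x \<in> V" "y \<in> V"
  shows "{x, y} \<subseteq> component V M x"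
proof -
  have "(x, y) \<in> rel M" using assms unfolding rel_def by simp
  then show ?thesis unfolding component_rel using assms by auto
qed

lemma comp_conn:
  assumes w: "wfe V M" and v: "v \<in> V" and C: "C = component V M v"
    and x: "x \<in> C" and y: "y \<in> C"
  shows "(x, y) \<in> (rel (edges_in M C))\<^sup>*"
proof -
  have main: "(v, u) \<in> (rel (edges_in M C))\<^sup>*" if "(v, u) \<in> (rel M)\<^sup>*" for u
    using that
  proof (induction rule: rtrancl_induct)
    case base then show ?case by simp
  next
    case (step y z)
    have yV: "y \<in> V" using reach_V[OF step(1) w v] .
    have zV: "z \<in> V" using rel_wfe[OF w step(2)] by simp
    have yC: "y \<in> C" using step(1) yV C unfolding component_rel by simp
    have "(v, z) \<in> (rel M)\<^sup>*" using step(1,2) by (rule rtrancl_into_rtrancl)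
    hence zC: "z \<in> C" using zV C unfolding component_rel by simp
    have "{y, z} \<in> M" using step(2) unfolding rel_def by simp
    hence "(y, z) \<in> rel (edges_in M C)" using yC zC unfolding rel_def edges_in_def by simp
    then show ?case using step(3) by (meson rtrancl_into_rtrancl)
  qed
  have "(v, x) \<in> (rel M)\<^sup>*" "(v, y) \<in> (rel M)\<^sup>*" using x y C unfolding component_rel by auto
  hence "(v, x) \<in> (rel (edges_in M C))\<^sup>*" "(v, y) \<in> (rel (edges_in M C))\<^sup>*" using main by auto
  then show ?thesis by (meson rtr_sym rtrancl_trans)
qed

lemma part_comp:
  assumes U: "\<Union>P = V" and D: "\<forall>B\<in>P. \<forall>B'\<in>P. B \<inter> B' \<noteq> {} \<longrightarrow> B = B'"
    and Ed: "\<forall>e\<in>M. \<exists>B\<in>P. e \<subseteq> B"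
    and Cn: "\<forall>B\<in>P. \<forall>x\<in>B. \<forall>y\<in>B. (x, y) \<in> (rel M)\<^sup>*"
    and B: "B \<in> P" and v: "v \<in> B"
  shows "component V M v = B"
proof
  have "u \<in> B" if "(v, u) \<in> (rel M)\<^sup>*" for u
    using that
  proof (induction rule: rtrancl_induct)
    case base then show ?case using v .
  next
    case (step y z)
    have "{y, z} \<in> M" using step(2) unfolding rel_def by simp
    then obtain B' where "B' \<in> P" "{y, z} \<subseteq> B'" using Ed by blast
    with step(3) D B have "B' = B" by blast
    with \<open>{y, z} \<subseteq> B'\<close> show ?case by simp
  qed
  then show "component V M v \<subseteq> B" unfolding component_rel by auto
  show "B \<subseteq> component V M v"
    using Cn B v U unfolding component_rel by blast
qed

lemma part_comps:
  assumes U: "\<Union>P = V" and D: "\<forall>B\<in>P. \<forall>B'\<in>P. B \<inter> B' \<noteq> {} \<longrightarrow> B = B'"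
    and Ed: "\<forall>e\<in>M. \<exists>B\<in>P. e \<subseteq> B"
    and Cn: "\<forall>B\<in>P. \<forall>x\<in>B. \<forall>y\<in>B. (x, y) \<in> (rel M)\<^sup>*"
    and ne: "{} \<notin> P"
  shows "components V M = P"
proof
  show "components V M \<subseteq> P"
  proof
    fix C assume "C \<in> components V M"
    then obtain v where v: "v \<in> V" "C = component V M v" unfolding components_def by auto
    then obtain B where "B \<in> P" "v \<in> B" using U by auto
    then show "C \<in> P" using part_comp[OF U D Ed Cn] v by auto
  qed
  show "P \<subseteq> components V M"
  proof
    fix B assume B: "B \<in> P"
    then obtain v where "v \<in> B" using ne by (metis ex_in_conv)
    then have "component V M v = B" "v \<in> V" using part_comp[OF U D Ed Cn B] B U by auto
    then show "B \<in> components V M" unfolding components_def by (metis image_eqI)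
  qed
qed

definition PM :: "'a list \<Rightarrow> 'a set set" where
  "PM vs = {{vs ! (2*j+1), vs ! (2*j+2)} | j. 2*j+2 < length vs}"

lemma PM_elem:
  assumes "B \<in> PM vs" "distinct vs"
  shows "\<exists>x y. x \<noteq> y \<and> B = {x, y} \<and> x \<in> set vs \<and> y \<in> set vs \<and> x \<noteq> vs ! 0 \<and> y \<noteq> vs ! 0"
proof -
  obtain j where j: "B = {vs ! (2*j+1), vs ! (2*j+2)}" "2*j+2 < length vs" using assms(1) unfolding PM_def by auto
  have l: "2*j+1 < length vs" "0 < length vs" using j(2) by auto
  have "vs ! (2*j+1) \<noteq> vs ! (2*j+2)" "vs ! (2*j+1) \<noteq> vs ! 0" "vs ! (2*j+2) \<noteq> vs ! 0"
    using nth_eq_iff_index_eq[OF assms(2)] l j(2) by auto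
  moreover have "vs ! (2*j+1) \<in> set vs" "vs ! (2*j+2) \<in> set vs" using l j(2) by auto
  ultimately show ?thesis using j(1) by blast
qed

lemma PM_sub: "distinct vs \<Longrightarrow> \<Union>(PM vs) \<subseteq> set vs - {vs ! 0}"
  using PM_elem by fastforce

lemma PM_cover:
  assumes "odd (length vs)" "x \<in> set vs" "x \<noteq> vs ! 0"
  shows "x \<in> \<Union>(PM vs)"
proof -
  obtain i where i: "i < length vs" "x = vs ! i" using assms(2) by (metis in_set_conv_nth)
  have "i \<noteq> 0" using i assms(3) by (metis)
  show ?thesis
  proof (cases "odd i")
    case True
    define j where "j = (i - 1) div 2"
    have "2*j+1 = i" using True \<open>i \<noteq> 0\<close> unfolding j_def by presburger
    moreover have "2*j+2 < length vs" using True assms(1) i(1) \<open>2*j+1 = i\<close> by presburger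
    ultimately have "{vs ! (2*j+1), vs ! (2*j+2)} \<in> PM vs" "x \<in> {vs ! (2*j+1), vs ! (2*j+2)}"
      unfolding PM_def using i by auto
    then show ?thesis by blast
  next
    case False
    define j where "j = (i - 2) div 2"
    have "2*j+2 = i" using False \<open>i \<noteq> 0\<close> unfolding j_def by presburger
    then have "{vs ! (2*j+1), vs ! (2*j+2)} \<in> PM vs" "x \<in> {vs ! (2*j+1), vs ! (2*j+2)}"
      unfolding PM_def using i by auto
    then show ?thesis by blast
  qed
qed

lemma PM_disj:
  assumes "distinct vs" "B \<in> PM vs" "B' \<in> PM vs" "B \<inter> B' \<noteq> {}"
  shows "B = B'"
proof -
  obtain j where j: "B = {vs ! (2*j+1), vs ! (2*j+2)}" "2*j+2 < length vs" using assms(2) unfolding PM_def by auto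
  obtain k where k: "B' = {vs ! (2*k+1), vs ! (2*k+2)}" "2*k+2 < length vs" using assms(3) unfolding PM_def by auto
  have "j = k"
  proof -
    have "vs ! (2*j+1) = vs ! (2*k+1) \<or> vs ! (2*j+1) = vs ! (2*k+2) \<or> vs ! (2*j+2) = vs ! (2*k+1) \<or> vs ! (2*j+2) = vs ! (2*k+2)"
      using assms(4) j k by auto
    then have "2*j+1 = 2*k+1 \<or> 2*j+1 = 2*k+2 \<or> 2*j+2 = 2*k+1 \<or> 2*j+2 = 2*k+2"
      using j(2) k(2) assms(1) by (auto simp: nth_eq_iff_index_eq)
    then show ?thesis by presburger
  qed
  then show ?thesis using j k by simp
qed

lemma wfe_sub: "simple_graph V E \<Longrightarrow> M \<subseteq> E \<Longrightarrow> wfe V M"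
  unfolding simple_graph_def wfe_def by blast

lemma odd_cycle_card: "is_odd_cycle M C \<Longrightarrow> card C \<ge> 3"
  unfolding is_odd_cycle_def by (auto simp: distinct_card)

lemma merge:
  assumes sg: "simple_graph V E'" and sgE: "simple_graph V E" and pm: "perfect_2_matching V E M"
    and C1: "C1 \<in> components V M" "is_odd_cycle M C1" and C2: "C2 \<in> components V M"
    and ne: "C1 \<noteq> C2"
    and as: "distinct as" "odd (length as)" "set as = C1"
    and bs: "distinct bs" "odd (length bs)" "set bs = C2"
    and sub1: "M - edges_in M C1 - edges_in M C2 \<subseteq> E'"
    and sub2: "PM as \<subseteq> E'" "PM bs \<subseteq> E'" "{as ! 0, bs ! 0} \<in> E'"
  shows "\<exists>M'. perfect_2_matching V E' M' \<and>
     card {C \<in> components V M'. is_odd_cycle M' C} < card {C \<in> components V M. is_odd_cycle M C}"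
proof -
  have MsE: "M \<subseteq> E" using pm unfolding perfect_2_matching_def by simp
  have wM: "wfe V M" using wfe_sub[OF sgE MsE] .
  have finV: "finite V" using sg unfolding simple_graph_def by simp
  define N where "N = insert {as ! 0, bs ! 0} (PM as \<union> PM bs)"
  define M' where "M' = (M - edges_in M C1 - edges_in M C2) \<union> N"
  define P0 where "P0 = components V M"
  define P' where "P' = (P0 - {C1, C2}) \<union> N"
  have P0comp: "\<exists>v\<in>V. C = component V M v" if "C \<in> P0" for C
    using that unfolding P0_def components_def by blast
  have P0sub: "C \<subseteq> V" if hC: "C \<in> P0" for C
  proof -
    obtain v where "C = component V M v" using P0comp[OF hC] by blast
    then show ?thesis using comp_sub by simp
  qed
  have P0ne: "C \<noteq> {}" if hC: "C \<in> P0" for C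
  proof -
    obtain v where "v \<in> V" "C = component V M v" using P0comp[OF hC] by blast
    then show ?thesis using comp_self by fast
  qed
  have P0disj: "C = D" if hC: "C \<in> P0" "D \<in> P0" "C \<inter> D \<noteq> {}" for C D
  proof -
    obtain v where v: "C = component V M v" using P0comp[OF hC(1)] by blast
    obtain w where w: "D = component V M w" using P0comp[OF hC(2)] by blast
    obtain x where "x \<in> C" "x \<in> D" using hC(3) by blast
    then show ?thesis using comp_disj[of x V M v w] v w by simp
  qed
  have P0U: "\<Union>P0 = V"
  proof
    show "\<Union>P0 \<subseteq> V" using P0sub by blast
    show "V \<subseteq> \<Union>P0"
    proof
      fix v assume v: "v \<in> V"
      have "component V M v \<in> P0" using v unfolding P0_def components_def by simp
      moreover have "v \<in> component V M v" using comp_self[OF v] .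
      ultimately show "v \<in> \<Union>P0" by blast
    qed
  qed
  have C12: "C1 \<in> P0" "C2 \<in> P0" using C1 C2 unfolding P0_def by auto
  have C12d: "C1 \<inter> C2 = {}" using P0disj[OF C12] ne by blast
  have la: "0 < length as" "0 < length bs" using odd_pos[OF as(2)] odd_pos[OF bs(2)] by simp_all
  have a0: "as ! 0 \<in> C1" "bs ! 0 \<in> C2" using nth_mem[OF la(1)] nth_mem[OF la(2)] unfolding as(3) bs(3) .
  have a0b0: "as ! 0 \<noteq> bs ! 0"
  proof
    assume "as ! 0 = bs ! 0"
    then have "as ! 0 \<in> C1 \<inter> C2" using a0 by simp
    then show False using C12d by simp
  qed
  have PMa: "\<Union>(PM as) = C1 - {as ! 0}" unfolding as(3)[symmetric]
  proof (rule equalityI)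
    show "\<Union>(PM as) \<subseteq> set as - {as ! 0}" using PM_sub[OF as(1)] .
    show "set as - {as ! 0} \<subseteq> \<Union>(PM as)"
    proof
      fix x assume "x \<in> set as - {as ! 0}"
      then show "x \<in> \<Union>(PM as)" using PM_cover[OF as(2)] by simp
    qed
  qed
  have PMb: "\<Union>(PM bs) = C2 - {bs ! 0}" unfolding bs(3)[symmetric]
  proof (rule equalityI)
    show "\<Union>(PM bs) \<subseteq> set bs - {bs ! 0}" using PM_sub[OF bs(1)] .
    show "set bs - {bs ! 0} \<subseteq> \<Union>(PM bs)"
    proof
      fix x assume "x \<in> set bs - {bs ! 0}"
      then show "x \<in> \<Union>(PM bs)" using PM_cover[OF bs(2)] by simp
    qed
  qed
  have UN: "\<Union>N = C1 \<union> C2"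
  proof -
    have "\<Union>N = {as ! 0, bs ! 0} \<union> (C1 - {as ! 0}) \<union> (C2 - {bs ! 0})"
      unfolding N_def by (simp add: PMa PMb Un_assoc)
    also have "\<dots> = C1 \<union> C2" using a0 by auto
    finally show ?thesis .
  qed
  have Nelem: "\<exists>x y. x \<noteq> y \<and> B = {x, y}" if hB: "B \<in> N" for B
    using hB unfolding N_def
  proof (elim insertE UnE)
    assume "B = {as ! 0, bs ! 0}" then show ?thesis using a0b0 by metis
  next
    assume "B \<in> PM as" then show ?thesis using PM_elem[OF _ as(1)] by metis
  next
    assume "B \<in> PM bs" then show ?thesis using PM_elem[OF _ bs(1)] by metis
  qed
  have h1: "X \<subseteq> C1 - {as ! 0}" if "X \<in> PM as" for X using PMa that by (metis Union_upper)
  have h2: "X \<subseteq> C2 - {bs ! 0}" if "X \<in> PM bs" for X using PMb that by (metis Union_upper)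
  have Ndisj: "B = B'" if hB: "B \<in> N" "B' \<in> N" "B \<inter> B' \<noteq> {}" for B B'
  proof -
    have c1: "X = Y" if "X \<in> PM as" "Y \<in> PM bs" "X \<inter> Y \<noteq> {}" for X Y
      using h1[OF that(1)] h2[OF that(2)] C12d that(3) by auto
    have c2: "X = Y" if "X \<in> PM as" "Y = {as ! 0, bs ! 0}" "X \<inter> Y \<noteq> {}" for X Y
      using h1[OF that(1)] that(2,3) a0 C12d by auto
    have c3: "X = Y" if "X \<in> PM bs" "Y = {as ! 0, bs ! 0}" "X \<inter> Y \<noteq> {}" for X Y
      using h2[OF that(1)] that(2,3) a0 C12d by auto
    show ?thesis using hB(1,2) unfolding N_def
      apply (elim insertE UnE)
      using c1 c2 c3 hB(3) PM_disj[OF as(1)] PM_disj[OF bs(1)]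
      by (simp_all add: Int_commute) (metis Int_commute)+
  qed
  have NsE: "N \<subseteq> E'" using sub2 unfolding N_def by auto
  have M'E: "M' \<subseteq> E'" using NsE sub1 unfolding M'_def by auto
  have NM': "N \<subseteq> M'" unfolding M'_def by auto
  have wM': "wfe V M'" using wfe_sub[OF sg M'E] .
  have UP: "\<Union>P' = V" unfolding P'_def using UN P0U C12 by auto
  have Pdisj: "\<forall>B\<in>P'. \<forall>B'\<in>P'. B \<inter> B' \<noteq> {} \<longrightarrow> B = B'"
  proof (intro ballI impI)
    fix B B' assume B: "B \<in> P'" "B' \<in> P'" "B \<inter> B' \<noteq> {}"
    have oldnew: False if hX: "X \<in> P0 - {C1, C2}" "Y \<in> N" "X \<inter> Y \<noteq> {}" for X Y
    proof -
      have "Y \<subseteq> C1 \<union> C2" using UN hX(2) by (metis Union_upper)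
      then obtain z where z: "z \<in> X" "z \<in> C1 \<or> z \<in> C2" using hX(3) by auto
      have XP: "X \<in> P0" "X \<noteq> C1" "X \<noteq> C2" using hX(1) by auto
      show False using z(2)
      proof
        assume "z \<in> C1" then show False using P0disj[OF XP(1) C12(1)] XP(2) z(1) by auto
      next
        assume "z \<in> C2" then show False using P0disj[OF XP(1) C12(2)] XP(3) z(1) by auto
      qed
    qed
    show "B = B'" using B(1,2) unfolding P'_def
    proof (elim UnE)
      assume "B \<in> P0 - {C1, C2}" "B' \<in> P0 - {C1, C2}" then show ?thesis using P0disj B(3) by auto
    next
      assume "B \<in> P0 - {C1, C2}" "B' \<in> N" then show ?thesis using oldnew B(3) by auto
    next
      assume "B \<in> N" "B' \<in> P0 - {C1, C2}" then show ?thesis using oldnew B(3) by (metis Int_commute)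
    next
      assume "B \<in> N" "B' \<in> N" then show ?thesis using Ndisj B(3) by auto
    qed
  qed
  have Pne: "{} \<notin> P'" unfolding P'_def using P0ne Nelem by blast
  have Ped: "\<forall>e\<in>M'. \<exists>B\<in>P'. e \<subseteq> B"
  proof
    fix e assume e: "e \<in> M'"
    show "\<exists>B\<in>P'. e \<subseteq> B"
    proof (cases "e \<in> N")
      case True then show ?thesis unfolding P'_def by blast
    next
      case False
      then have eM: "e \<in> M" "e \<notin> edges_in M C1" "e \<notin> edges_in M C2" using e unfolding M'_def by auto
      then obtain x y where xy: "x \<noteq> y" "e = {x, y}" "x \<in> V" "y \<in> V" using wM unfolding wfe_def by blast
      have "e \<subseteq> component V M x" using comp_edge[of x y M V] eM xy by simp
      moreover have "component V M x \<in> P0" using xy unfolding P0_def components_def by simp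
      moreover have "component V M x \<noteq> C1" "component V M x \<noteq> C2"
        using eM calculation(1) unfolding edges_in_def by auto
      ultimately show ?thesis unfolding P'_def by blast
    qed
  qed
  have EIeq: "edges_in M' C = edges_in M C" if hC: "C \<in> P0 - {C1, C2}" for C
  proof -
    have CP: "C \<in> P0" "C \<noteq> C1" "C \<noteq> C2" using hC by auto
    have dC: "C \<inter> C1 = {}" "C \<inter> C2 = {}"
      using P0disj[OF CP(1) C12(1)] P0disj[OF CP(1) C12(2)] CP(2,3) by auto
    have nN: "e \<notin> N" if he: "e \<subseteq> C" for e
    proof
      assume eN: "e \<in> N"
      then obtain x y where xy: "e = {x, y}" using Nelem by metis
      then have "x \<in> \<Union>N" using eN by auto
      then have "x \<in> C1 \<union> C2" using UN by simp
      moreover have "x \<in> C" using he xy by simp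
      ultimately show False using dC by auto
    qed
    have nE: "e \<notin> edges_in M C1 \<and> e \<notin> edges_in M C2" if he: "e \<in> M" "e \<subseteq> C" for e
    proof -
      obtain x y where xy: "e = {x, y}" using wM he(1) unfolding wfe_def by metis
      then have "x \<in> C" using he(2) by simp
      then have "x \<notin> C1" "x \<notin> C2" using dC by auto
      then show ?thesis using xy unfolding edges_in_def by auto
    qed
    show ?thesis
    proof (rule set_eqI)
      fix e
      show "e \<in> edges_in M' C \<longleftrightarrow> e \<in> edges_in M C"
        using nN[of e] nE[of e] unfolding edges_in_def M'_def by auto
    qed
  qed
  have Pcn: "\<forall>B\<in>P'. \<forall>x\<in>B. \<forall>y\<in>B. (x, y) \<in> (rel M')\<^sup>*"
  proof (intro ballI)
    fix B x y assume B: "B \<in> P'" and x: "x \<in> B" and y: "y \<in> B"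
    show "(x, y) \<in> (rel M')\<^sup>*"
    proof (cases "B \<in> N")
      case True
      then obtain u w where uw: "B = {u, w}" using Nelem by blast
      have "(u, w) \<in> rel M'" "(w, u) \<in> rel M'" using True uw NM' unfolding rel_def by (auto simp: insert_commute)
      then show ?thesis using x y uw by auto
    next
      case False
      then have BP: "B \<in> P0 - {C1, C2}" using B unfolding P'_def by blast
      then obtain v where v: "v \<in> V" "B = component V M v" using P0comp by blast
      have "(x, y) \<in> (rel (edges_in M B))\<^sup>*" using comp_conn[OF wM v x y] .
      moreover have "rel (edges_in M B) \<subseteq> rel M'"
        using EIeq[OF BP] by (intro rel_mono) (auto simp: edges_in_def)
      ultimately show ?thesis using rtrancl_mono by blast
    qed
  qed
  have compsM': "components V M' = P'" using part_comps[OF UP Pdisj Ped Pcn Pne] .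
  have K2N: "is_K2 M' B" if hB: "B \<in> N" for B
  proof -
    obtain u w where uw: "u \<noteq> w" "B = {u, w}" using Nelem[OF hB] by blast
    have "edges_in M' B = {{u, w}}"
    proof
      show "{{u, w}} \<subseteq> edges_in M' B" using hB uw NM' unfolding edges_in_def by auto
      show "edges_in M' B \<subseteq> {{u, w}}"
      proof
        fix e assume "e \<in> edges_in M' B"
        then have "e \<in> M'" "e \<subseteq> {u, w}" using uw unfolding edges_in_def by auto
        then obtain x y where "x \<noteq> y" "e = {x, y}" using wM' unfolding wfe_def by blast
        then show "e \<in> {{u, w}}" using \<open>e \<subseteq> {u, w}\<close> by auto
      qed
    qed
    then show ?thesis unfolding is_K2_def using uw by blast
  qed
  have pm': "perfect_2_matching V E' M'"
    unfolding perfect_2_matching_def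
  proof (intro conjI ballI)
    show "M' \<subseteq> E'" using M'E .
    fix C assume "C \<in> components V M'"
    then have "C \<in> P'" using compsM' by simp
    then show "is_K2 M' C \<or> is_odd_cycle M' C"
    proof (cases "C \<in> N")
      case True then show ?thesis using K2N by blast
    next
      case False
      then have CP: "C \<in> P0 - {C1, C2}" using \<open>C \<in> P'\<close> unfolding P'_def by blast
      then have "is_K2 M C \<or> is_odd_cycle M C" using pm unfolding perfect_2_matching_def P0_def by blast
      then show ?thesis unfolding is_K2_def is_odd_cycle_def using EIeq[OF CP] by simp
    qed
  qed
  have subs: "{C \<in> components V M'. is_odd_cycle M' C} \<subseteq> {C \<in> components V M. is_odd_cycle M C} - {C1}"
  proof
    fix C assume C: "C \<in> {C \<in> components V M'. is_odd_cycle M' C}"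
    then have CP: "C \<in> P'" "is_odd_cycle M' C" using compsM' by auto
    have "C \<notin> N"
    proof
      assume "C \<in> N"
      then obtain u w where "C = {u, w}" using Nelem by blast
      then have "card C \<le> 2" by (simp add: card_insert_le_m1)
      then show False using odd_cycle_card[OF CP(2)] by simp
    qed
    then have CP0: "C \<in> P0 - {C1, C2}" using CP unfolding P'_def by blast
    then have "is_odd_cycle M C" using CP(2) EIeq[OF CP0] unfolding is_odd_cycle_def by simp
    then show "C \<in> {C \<in> components V M. is_odd_cycle M C} - {C1}" using CP0 P0_def by auto
  qed
  have fin: "finite {C \<in> components V M. is_odd_cycle M C}"
    using finV unfolding components_def by simp
  have "C1 \<in> {C \<in> components V M. is_odd_cycle M C}" using C1 by simp
  then have "card ({C \<in> components V M. is_odd_cycle M C} - {C1}) < card {C \<in> components V M. is_odd_cycle M C}"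
    using fin by (meson card_Diff1_less)
  moreover have "card {C \<in> components V M'. is_odd_cycle M' C} \<le> card ({C \<in> components V M. is_odd_cycle M C} - {C1})"
    using subs fin by (meson card_mono finite_Diff)
  ultimately show ?thesis using pm' by (meson le_less_trans)
qed

definition cyc :: "'a list \<Rightarrow> 'a set set" where
  "cyc vs = {{vs ! i, vs ! ((i + 1) mod length vs)} | i. i < length vs}"

lemma PM_cyc: "PM vs \<subseteq> cyc vs"
proof
  fix e assume "e \<in> PM vs"
  then obtain j where j: "e = {vs ! (2*j+1), vs ! (2*j+2)}" "2*j+2 < length vs" unfolding PM_def by auto
  have "(2*j+1 + 1) mod length vs = 2*j+2" using j(2) by simp
  then have "e = {vs ! (2*j+1), vs ! ((2*j+1 + 1) mod length vs)}" using j(1) by simp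
  then show "e \<in> cyc vs" unfolding cyc_def using j(2) by (intro CollectI exI[of _ "2*j+1"]) auto
qed

lemma PM_rot_cyc:
  assumes "2 \<le> length vs"
  shows "PM (rotate1 vs) \<subseteq> cyc vs"
proof
  fix e assume "e \<in> PM (rotate1 vs)"
  then obtain j where j: "e = {rotate1 vs ! (2*j+1), rotate1 vs ! (2*j+2)}" "2*j+2 < length vs"
    unfolding PM_def by auto
  have r1: "rotate1 vs ! (2*j+1) = vs ! (2*j+2)" using j(2) by (simp add: nth_rotate1)
  have r2: "rotate1 vs ! (2*j+2) = vs ! ((2*j+2 + 1) mod length vs)" using j(2) by (simp add: nth_rotate1)
  have "e = {vs ! (2*j+2), vs ! ((2*j+2 + 1) mod length vs)}" using j(1) r1 r2 by simp
  then show "e \<in> cyc vs" unfolding cyc_def using j(2) by (intro CollectI exI[of _ "2*j+2"]) auto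
qed

lemma A_cyc: "3 \<le> length vs \<Longrightarrow> {vs ! 0, vs ! 1} \<in> cyc vs"
  unfolding cyc_def by (intro CollectI exI[of _ 0]) auto

lemma A_notin_PM:
  assumes "distinct vs" "3 \<le> length vs"
  shows "{vs ! 0, vs ! 1} \<notin> PM vs"
proof
  assume "{vs ! 0, vs ! 1} \<in> PM vs"
  then obtain x y where "{vs ! 0, vs ! 1} = {x, y}" "x \<noteq> vs ! 0" "y \<noteq> vs ! 0"
    using PM_elem[OF _ assms(1)] by metis
  then show False by (auto simp: doubleton_eq_iff)
qed

lemma rot0:
  assumes "2 \<le> length vs" shows "rotate1 vs ! 0 = vs ! 1"
proof -
  have "rotate1 vs ! 0 = vs ! (Suc 0 mod length vs)" using assms by (intro nth_rotate1) auto
  moreover have "Suc 0 mod length vs = 1" using assms by simp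
  ultimately show ?thesis by simp
qed

lemma card_swap:
  assumes "finite S" "A \<in> S" "X \<notin> S"
  shows "card (insert X (S - {A})) = card S"
proof -
  have "X \<notin> S - {A}" using assms(3) by simp
  then have "card (insert X (S - {A})) = Suc (card (S - {A}))" using assms(1) by simp
  also have "\<dots> = card S" using assms(1,2) card_Suc_Diff1 by metis
  finally show ?thesis .
qed

lemma swap_set:
  assumes "v \<in> X" "v \<in> A" "v \<notin> Y" "v \<notin> B"
  shows "{e \<in> insert X (insert Y (E - {A, B})). v \<in> e} = insert X ({e \<in> E. v \<in> e} - {A})"
  using assms by auto

lemma swap_set0:
  assumes "v \<notin> X" "v \<notin> Y"
  shows "{e \<in> insert X (insert Y (E - {A, B})). v \<in> e} = {e \<in> E. v \<in> e} - {A, B}"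
  using assms by auto

lemma swap_degree:
  assumes fin: "finite E" and AB: "A \<in> E" "B \<in> E"
    and XY: "X \<notin> E" "Y \<notin> E" and AB': "A \<noteq> B" "X \<noteq> Y"
    and cov: "v \<in> A \<or> v \<in> B \<longleftrightarrow> v \<in> X \<or> v \<in> Y"
    and cov2: "\<not> (v \<in> X \<and> v \<in> Y)"
    and one: "\<not> (v \<in> A \<and> v \<in> B)"
  shows "degree (insert X (insert Y (E - {A, B}))) v = degree E v"
proof -
  let ?S = "{e \<in> E. v \<in> e}"
  have finS: "finite ?S" using fin by simp
  have XS: "X \<notin> ?S" "Y \<notin> ?S" using XY by auto
  consider "v \<in> A" "v \<in> X" "v \<notin> Y" "v \<notin> B" | "v \<in> A" "v \<in> Y" "v \<notin> X" "v \<notin> B"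
    | "v \<in> B" "v \<in> X" "v \<notin> Y" "v \<notin> A" | "v \<in> B" "v \<in> Y" "v \<notin> X" "v \<notin> A"
    | "v \<notin> A" "v \<notin> B" "v \<notin> X" "v \<notin> Y"
    using cov cov2 one by blast
  then show ?thesis
  proof cases
    case 1
    have "A \<in> ?S" using 1 AB by simp
    then show ?thesis using swap_set[OF 1(2,1,3,4)] card_swap[OF finS \<open>A \<in> ?S\<close> XS(1)] by (simp add: degree_def)
  next
    case 2
    have "A \<in> ?S" using 2 AB by simp
    have "insert X (insert Y (E - {A, B})) = insert Y (insert X (E - {A, B}))" by auto
    then show ?thesis using swap_set[OF 2(2,1,3,4)] card_swap[OF finS \<open>A \<in> ?S\<close> XS(2)] by (simp add: degree_def)
  next
    case 3
    have "B \<in> ?S" using 3 AB by simp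
    have "insert X (insert Y (E - {A, B})) = insert X (insert Y (E - {B, A}))" by auto
    then show ?thesis using swap_set[OF 3(2,1,3,4)] card_swap[OF finS \<open>B \<in> ?S\<close> XS(1)] by (simp add: degree_def)
  next
    case 4
    have "B \<in> ?S" using 4 AB by simp
    have "insert X (insert Y (E - {A, B})) = insert Y (insert X (E - {B, A}))" by auto
    then show ?thesis using swap_set[OF 4(2,1,3,4)] card_swap[OF finS \<open>B \<in> ?S\<close> XS(2)] by (simp add: degree_def)
  next
    case 5
    have "?S - {A, B} = ?S" using 5 by auto
    then show ?thesis using swap_set0[OF 5(3,4)] by (simp add: degree_def)
  qed
qed

lemma comps_disj:
  assumes "C1 \<in> components V M" "C2 \<in> components V M" "C1 \<noteq> C2"
  shows "C1 \<inter> C2 = {}"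
proof (rule ccontr)
  assume "C1 \<inter> C2 \<noteq> {}"
  then obtain x where x: "x \<in> C1" "x \<in> C2" by blast
  obtain v where v: "C1 = component V M v" using assms(1) unfolding components_def by (rule imageE)
  obtain w where w: "C2 = component V M w" using assms(2) unfolding components_def by (rule imageE)
  note vw = v w
  show False using comp_disj[of x V M v w] x assms(3) vw by simp
qed

lemma comps_sub: "C \<in> components V M \<Longrightarrow> C \<subseteq> V"
  unfolding components_def using comp_sub by (metis imageE)

lemma sg_finE: "simple_graph V E \<Longrightarrow> finite E"
proof -
  assume sg: "simple_graph V E"
  have "E \<subseteq> Pow V"
  proof
    fix e assume "e \<in> E"
    then obtain u v where "e = {u, v}" "u \<in> V" "v \<in> V" using sg unfolding simple_graph_def by metis
    then show "e \<in> Pow V" by simp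
  qed
  moreover have "finite (Pow V)" using sg unfolding simple_graph_def by simp
  ultimately show "finite E" by (rule finite_subset)
qed

lemma step:
  assumes sgE: "simple_graph V E" and pm: "perfect_2_matching V E M"
    and C1: "C1 \<in> components V M" "is_odd_cycle M C1"
    and C2: "C2 \<in> components V M" "is_odd_cycle M C2" and ne: "C1 \<noteq> C2"
  shows "\<exists>E' M'. simple_graph V E' \<and> (\<forall>v\<in>V. degree E' v = degree E v) \<and>
     perfect_2_matching V E' M' \<and>
     card {C \<in> components V M'. is_odd_cycle M' C} < card {C \<in> components V M. is_odd_cycle M C}"
proof -
  obtain as where as: "distinct as" "3 \<le> length as" "odd (length as)" "set as = C1" "edges_in M C1 = cyc as"
    using C1(2) unfolding is_odd_cycle_def cyc_def by blast
  obtain bs where bs: "distinct bs" "3 \<le> length bs" "odd (length bs)" "set bs = C2" "edges_in M C2 = cyc bs"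
    using C2(2) unfolding is_odd_cycle_def cyc_def by blast
  have MsE: "M \<subseteq> E" using pm unfolding perfect_2_matching_def by simp
  have eiM: "edges_in M C \<subseteq> M" for C by (auto simp: edges_in_def)
  have cycaE: "cyc as \<subseteq> E" using as(5) eiM[of C1] MsE by simp
  have cycbE: "cyc bs \<subseteq> E" using bs(5) eiM[of C2] MsE by simp
  have PMaE: "PM as \<subseteq> E" using PM_cyc[of as] cycaE by simp
  have PMbE: "PM bs \<subseteq> E" using PM_cyc[of bs] cycbE by simp
  have PMraE: "PM (rotate1 as) \<subseteq> E" using PM_rot_cyc[of as] as(2) cycaE by simp
  have PMrbE: "PM (rotate1 bs) \<subseteq> E" using PM_rot_cyc[of bs] bs(2) cycbE by simp
  have sub1E: "M - edges_in M C1 - edges_in M C2 \<subseteq> E" using MsE by blast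
  have ras: "distinct (rotate1 as)" "odd (length (rotate1 as))" "set (rotate1 as) = C1" using as by simp_all
  have rbs: "distinct (rotate1 bs)" "odd (length (rotate1 bs))" "set (rotate1 bs) = C2" using bs by simp_all
  have ra0: "rotate1 as ! 0 = as ! 1" using rot0[of as] as(2) by simp
  have rb0: "rotate1 bs ! 0 = bs ! 1" using rot0[of bs] bs(2) by simp
  have dis: "C1 \<inter> C2 = {}" using comps_disj[OF C1(1) C2(1) ne] .
  have a01: "as ! 0 \<in> C1" "as ! 1 \<in> C1"
  proof -
    have "as ! 0 \<in> set as" "as ! 1 \<in> set as" using as(2) by (auto intro!: nth_mem)
    then show "as ! 0 \<in> C1" "as ! 1 \<in> C1" using as(4) by simp_all
  qed
  have b01: "bs ! 0 \<in> C2" "bs ! 1 \<in> C2"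
  proof -
    have "bs ! 0 \<in> set bs" "bs ! 1 \<in> set bs" using bs(2) by (auto intro!: nth_mem)
    then show "bs ! 0 \<in> C2" "bs ! 1 \<in> C2" using bs(4) by simp_all
  qed
  have ane: "as ! 0 \<noteq> as ! 1"
  proof -
    have l: "0 < length as" "1 < length as" using as(2) by auto
    show ?thesis using nth_eq_iff_index_eq[OF as(1) l] by simp
  qed
  have bne: "bs ! 0 \<noteq> bs ! 1"
  proof -
    have l: "0 < length bs" "1 < length bs" using bs(2) by auto
    show ?thesis using nth_eq_iff_index_eq[OF bs(1) l] by simp
  qed
  have C1V: "C1 \<subseteq> V" using comps_sub[OF C1(1)] .
  have C2V: "C2 \<subseteq> V" using comps_sub[OF C2(1)] .
  have finE: "finite E" using sg_finE[OF sgE] .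
  consider "{as ! 0, bs ! 0} \<in> E" | "{as ! 1, bs ! 1} \<in> E" | "{as ! 0, bs ! 0} \<notin> E" "{as ! 1, bs ! 1} \<notin> E"
    by blast
  then show ?thesis
  proof cases
    case 1
    obtain M' where "perfect_2_matching V E M' \<and>
       card {C \<in> components V M'. is_odd_cycle M' C} < card {C \<in> components V M. is_odd_cycle M C}"
      using merge[OF sgE sgE pm C1 C2(1) ne as(1,3,4) bs(1,3,4) sub1E PMaE PMbE 1] by blast
    then show ?thesis using sgE by blast
  next
    case 2
    have "{rotate1 as ! 0, rotate1 bs ! 0} \<in> E" using 2 ra0 rb0 by simp
    then obtain M' where "perfect_2_matching V E M' \<and>
       card {C \<in> components V M'. is_odd_cycle M' C} < card {C \<in> components V M. is_odd_cycle M C}"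
      using merge[OF sgE sgE pm C1 C2(1) ne ras rbs sub1E PMraE PMrbE] by blast
    then show ?thesis using sgE by blast
  next
    case 3
    define A where "A = {as ! 0, as ! 1}"
    define B where "B = {bs ! 0, bs ! 1}"
    define X where "X = {as ! 0, bs ! 0}"
    define Y where "Y = {as ! 1, bs ! 1}"
    define E' where "E' = insert X (insert Y (E - {A, B}))"
    have XY: "X \<notin> E" "Y \<notin> E" using 3 X_def Y_def by auto
    have AcA: "A \<in> edges_in M C1" using A_cyc[OF as(2)] as(5) A_def by simp
    have BcB: "B \<in> edges_in M C2" using A_cyc[OF bs(2)] bs(5) B_def by simp
    have AE: "A \<in> E" using AcA eiM MsE by blast
    have BE: "B \<in> E" using BcB eiM MsE by blast
    have d1: "as ! 0 \<noteq> bs ! 0" "as ! 0 \<noteq> bs ! 1" "as ! 1 \<noteq> bs ! 0" "as ! 1 \<noteq> bs ! 1"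
      using a01 b01 dis by auto
    have sgE': "simple_graph V E'"
      unfolding simple_graph_def
    proof (intro conjI ballI)
      show "finite V" using sgE unfolding simple_graph_def by simp
      fix e assume "e \<in> E'"
      then consider "e = X" | "e = Y" | "e \<in> E" unfolding E'_def by blast
      then show "\<exists>u v. u \<noteq> v \<and> e = {u, v} \<and> u \<in> V \<and> v \<in> V"
      proof cases
        case 1 then show ?thesis using X_def d1 a01 b01 C1V C2V by blast
      next
        case 2 then show ?thesis using Y_def d1 a01 b01 C1V C2V by blast
      next
        case 3 then show ?thesis using sgE unfolding simple_graph_def by blast
      qed
    qed
    have sub1: "M - edges_in M C1 - edges_in M C2 \<subseteq> E'"
    proof
      fix e assume "e \<in> M - edges_in M C1 - edges_in M C2"
      then have "e \<in> E" "e \<noteq> A" "e \<noteq> B" using MsE AcA BcB by auto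
      then show "e \<in> E'" unfolding E'_def by simp
    qed
    have PMa': "PM as \<subseteq> E'"
    proof
      fix e assume e: "e \<in> PM as"
      have "e \<noteq> A" using A_notin_PM[OF as(1,2)] e A_def by auto
      moreover have "e \<noteq> B"
      proof
        assume "e = B"
        then have "bs ! 0 \<in> \<Union>(PM as)" using e B_def by auto
        then have "bs ! 0 \<in> C1" using PM_sub[OF as(1)] as(4) by auto
        then show False using b01 dis by auto
      qed
      ultimately show "e \<in> E'" using e PMaE unfolding E'_def by auto
    qed
    have PMb': "PM bs \<subseteq> E'"
    proof
      fix e assume e: "e \<in> PM bs"
      have "e \<noteq> B" using A_notin_PM[OF bs(1,2)] e B_def by auto
      moreover have "e \<noteq> A"
      proof
        assume "e = A"
        then have "as ! 0 \<in> \<Union>(PM bs)" using e A_def by auto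
        then have "as ! 0 \<in> C2" using PM_sub[OF bs(1)] bs(4) by auto
        then show False using a01 dis by auto
      qed
      ultimately show "e \<in> E'" using e PMbE unfolding E'_def by auto
    qed
    have XE': "{as ! 0, bs ! 0} \<in> E'" unfolding E'_def X_def by simp
    obtain M' where M': "perfect_2_matching V E' M' \<and>
       card {C \<in> components V M'. is_odd_cycle M' C} < card {C \<in> components V M. is_odd_cycle M C}"
      using merge[OF sgE' sgE pm C1 C2(1) ne as(1,3,4) bs(1,3,4) sub1 PMa' PMb' XE'] by blast
    have AB: "A \<noteq> B" using A_def B_def d1 by auto
    have XYne: "X \<noteq> Y" using X_def Y_def ane d1 by auto
    have deg: "degree E' v = degree E v" for v
      unfolding E'_def
    proof (rule swap_degree[OF finE AE BE XY AB XYne])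
      show "(v \<in> A \<or> v \<in> B) = (v \<in> X \<or> v \<in> Y)" unfolding A_def B_def X_def Y_def by auto
      show "\<not> (v \<in> X \<and> v \<in> Y)" unfolding X_def Y_def using ane bne d1 by auto
      show "\<not> (v \<in> A \<and> v \<in> B)" unfolding A_def B_def using ane bne d1 by auto
    qed
    show ?thesis using sgE' deg M' by blast
  qed
qed

lemma main_ind:
  "\<forall>E M. simple_graph V E \<longrightarrow> perfect_2_matching V E M \<longrightarrow>
     card {C \<in> components V M. is_odd_cycle M C} = n \<longrightarrow>
     (\<exists>E'. simple_graph V E' \<and> (\<forall>v\<in>V. degree E' v = degree E v) \<and>
           (\<exists>M. perfect_2_matching V E' M \<and> card {C \<in> components V M. is_odd_cycle M C} \<le> 1))"
proof (induction n rule: less_induct)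
  case (less n)
  show ?case
  proof (intro allI impI)
    fix E M assume sgE: "simple_graph V E" and pm: "perfect_2_matching V E M"
      and cn: "card {C \<in> components V M. is_odd_cycle M C} = n"
    show "\<exists>E'. simple_graph V E' \<and> (\<forall>v\<in>V. degree E' v = degree E v) \<and>
           (\<exists>M. perfect_2_matching V E' M \<and> card {C \<in> components V M. is_odd_cycle M C} \<le> 1)"
    proof (cases "n \<le> 1")
      case True
      then have "card {C \<in> components V M. is_odd_cycle M C} \<le> 1" using cn by simp
      then have "\<exists>M. perfect_2_matching V E M \<and> card {C \<in> components V M. is_odd_cycle M C} \<le> 1"
        using pm by (intro exI[of _ M]) simp
      moreover have "\<forall>v\<in>V. degree E v = degree E v" by simp
      ultimately show ?thesis using sgE by (intro exI[of _ E]) simp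
    next
      case False
      let ?S = "{C \<in> components V M. is_odd_cycle M C}"
      have "card ?S > 0" using cn False by simp
      then have fin: "finite ?S" by (rule card_ge_0_finite)
      have "\<not> (\<forall>a\<in>?S. \<forall>b\<in>?S. a = b)"
        using card_le_Suc0_iff_eq[OF fin] cn False by simp
      then obtain C1 C2 where C: "C1 \<in> ?S" "C2 \<in> ?S" "C1 \<noteq> C2" by blast
      have c1: "C1 \<in> components V M" "is_odd_cycle M C1" using C(1) by simp_all
      have c2: "C2 \<in> components V M" "is_odd_cycle M C2" using C(2) by simp_all
      obtain E1 M1 where E1: "simple_graph V E1" "\<forall>v\<in>V. degree E1 v = degree E v"
        "perfect_2_matching V E1 M1" "card {C \<in> components V M1. is_odd_cycle M1 C} < card ?S"
        using step[OF sgE pm c1 c2 C(3)] by blast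
      have lt: "card {C \<in> components V M1. is_odd_cycle M1 C} < n" using E1(4) cn by simp
      obtain E2 where E2: "simple_graph V E2" "\<forall>v\<in>V. degree E2 v = degree E1 v"
        "\<exists>M. perfect_2_matching V E2 M \<and> card {C \<in> components V M. is_odd_cycle M C} \<le> 1"
        using less.IH[OF lt] E1(1,3) by blast
      have "\<forall>v\<in>V. degree E2 v = degree E v" using E1(2) E2(2) by simp
      then show ?thesis using E2(1,3) by blast
    qed
  qed
qed

theorem lemma18:
  fixes V :: "'a set" and E :: "'a set set"
  assumes "simple_graph V E"
    and "\<exists>M. perfect_2_matching V E M"
  shows "\<exists>E'. simple_graph V E' \<and> (\<forall>v\<in>V. degree E' v = degree E v) \<and>
           (\<exists>M. perfect_2_matching V E' M \<and>
                card {C \<in> components V M. is_odd_cycle M C} \<le> 1)"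
proof -
  obtain M where "perfect_2_matching V E M" using assms(2) by blast
  then show ?thesis using main_ind assms(1) by blast
qed

end
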